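(* Let $x \in \mathbb{R}^n$ be the input data and let the coordinate index set $\{1,\dots,n\}$ be partitioned into $L$ nonempty levels; write $V_l \subseteq \mathbb{R}^n$ for the coordinate subspace of level $l$ ($l=1,\dots,L$, level $L$ coarsest, level $1$ finest), so that the $V_l$ are mutually orthogonal and $\mathbb{R}^n=\bigoplus_l V_l$. Let $\Pi_l$ be the orthogonal projection onto $V_l$, and for $v\in\mathbb{R}^n$ write $v_l=\Pi_l v$ and $v_{>l}=\sum_{m>l}\Pi_m v$ (so $v_{>L}=0$). For each $l$ let $P_l:\mathbb{R}^n\to V_l$ be a linear interpolation-prediction operator with $P_l v = P_l(v_{>l})$ for all $v$ (it uses only coordinates of coarser levels), and suppose $\|P_l\|_\infty\le p$ for all $l$, where $\|\cdot\|_\infty$ denotes the operator norm induced by the max-norm, and $p\ge 1$ ($p=1$ for linear interpolation, $p=1.25$ for cubic interpolation). Compression: for $l=L,L-1,\dots,1$, set $y_l = x_l - P_l\hat x_{>l}$, choose a quantized/dequantized value $\hat y_l\in V_l$ with $\|y_l-\hat y_l\|_\infty\le eb$ (where $eb>0$ is the compression error bound), and set $\hat x_l = P_l\hat x_{>l}+\hat y_l$. Progressive retrieval: for each level $l$ let $\tilde y_l\in V_l$ be the value reconstructed from only the loaded bitplanes, and define the information loss $\delta y_l=\hat y_l-\tilde y_l\in V_l$. Reconstruct, for $l=L,\dots,1$, $\tilde x_l = P_l\tilde x_{>l}+\tilde y_l$, and let $\tilde x=\sum_l \tilde x_l$. Then $$\|x-\tilde x\|_\infty \le \sum_{l=0}^{L-1}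 p^{\,l}\,\|\delta y_{l+1}\|_\infty + eb .$$
   Context: This models an interpolation-based progressive lossy compressor: data are split into hierarchical levels (by interpolation stride), each level is predicted by interpolation from already-reconstructed coarser levels, the prediction residual is quantized with pointwise error at most $eb$, and the quantized integers are stored by bitplanes so that a retrieval may load only some bitplanes of each level; $\delta y_l$ is the resulting loss at level $l$ relative to full retrieval. Linear interpolation predicts $y_i=\tfrac12(x_{i-1}+x_{i+1})$ (coefficients with absolute sum $1$), cubic interpolation predicts $y_i=-\tfrac1{16}x_{i-3}+\tfrac9{16}x_{i-1}+\tfrac9{16}x_{i+1}-\tfrac1{16}x_{i+3}$ (absolute sum $1.25$). $\|v\|_\infty$ for a vector is the maximum absolute entry. *)

theory Defs
  imports "HOL-Analysis.Analysis"
begin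

text \<open>Coordinates are indexed by a finite type 'n; the level of coordinate i is lev i
  (levels 1..L). The max-norm is the library's infnorm.\<close>

definition level_space :: "('n::finite \<Rightarrow> nat) \<Rightarrow> nat \<Rightarrow> (real ^ 'n) set" where
  "level_space lev l = {v. \<forall>i. lev i \<noteq> l \<longrightarrow> v $ i = 0}"

definition lvl_proj :: "('n::finite \<Rightarrow> nat) \<Rightarrow> nat \<Rightarrow> real ^ 'n \<Rightarrow> real ^ 'n" where
  "lvl_proj lev l v = (\<chi> i. if lev i = l then v $ i else 0)"

definition coarser :: "nat \<Rightarrow> ('n::finite \<Rightarrow> nat) \<Rightarrow> nat \<Rightarrow> real ^ 'n \<Rightarrow> real ^ 'n" where
  "coarser L lev l v = (\<Sum>m\<in>{l<..L}. lvl_proj lev m v)"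

end

theory Submission
  imports Defs
begin

lemma infnorm_le_cart: "(\<And>i. \<bar>(x::real^'n)$i\<bar> \<le> b) \<Longrightarrow> infnorm x \<le> b"
  unfolding infnorm_cart by (rule cSup_least) auto

lemma reidx: "(\<Sum>m\<in>{1..L}. g m) = (\<Sum>l<L. g (l+1::nat))"
  by (induction L) auto

lemma level_space_add: "a \<in> level_space lev l \<Longrightarrow> b \<in> level_space lev l \<Longrightarrow> a + b \<in> level_space lev l"
  unfolding level_space_def by auto

theorem theorem5p1:
  fixes x :: "real ^ 'n"
    and lev :: "'n \<Rightarrow> nat" and L :: nat
    and P :: "nat \<Rightarrow> real ^ 'n \<Rightarrow> real ^ 'n"
    and p eb :: real
    and yhat xhat ytil xtil :: "nat \<Rightarrow> real ^ 'n"
  assumes levels: "lev ` UNIV = {1..L}"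
    and P_linear: "\<And>l. l \<in> {1..L} \<Longrightarrow> linear (P l)"
    and P_range: "\<And>l v. l \<in> {1..L} \<Longrightarrow> P l v \<in> level_space lev l"
    and P_coarse: "\<And>l v. l \<in> {1..L} \<Longrightarrow> P l v = P l (coarser L lev l v)"
    and P_norm: "\<And>l v. l \<in> {1..L} \<Longrightarrow> infnorm (P l v) \<le> p * infnorm v"
    and p_ge: "p \<ge> 1"
    and eb_pos: "eb > 0"
    and yhat_in: "\<And>l. l \<in> {1..L} \<Longrightarrow> yhat l \<in> level_space lev l"
    and quant: "\<And>l. l \<in> {1..L} \<Longrightarrow>
        infnorm ((lvl_proj lev l x - P l (\<Sum>m\<in>{l<..L}. xhat m)) - yhat l) \<le> eb"
    and xhat_def: "\<And>l. l \<in> {1..L} \<Longrightarrow> xhat l = P l (\<Sum>m\<in>{l<..L}. xhat m) + yhat l"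
    and ytil_in: "\<And>l. l \<in> {1..L} \<Longrightarrow> ytil l \<in> level_space lev l"
    and xtil_def: "\<And>l. l \<in> {1..L} \<Longrightarrow> xtil l = P l (\<Sum>m\<in>{l<..L}. xtil m) + ytil l"
  shows "infnorm (x - (\<Sum>l\<in>{1..L}. xtil l))
           \<le> (\<Sum>l<L. p ^ l * infnorm (yhat (l + 1) - ytil (l + 1))) + eb"
proof -
  define d where "d m = infnorm (yhat m - ytil m)" for m
  define B where "B l = (\<Sum>m\<in>{l..L}. p^(m-l) * d m)" for l
  have dnn: "d m \<ge> 0" for m unfolding d_def by (rule infnorm_pos_le)
  have Bnn: "B l \<ge> 0" for l unfolding B_def using dnn p_ge by (intro sum_nonneg) auto
  have Bmono: "B k \<le> B l" if "l \<le> k" for l k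
  proof -
    have "B k \<le> (\<Sum>m\<in>{k..L}. p^(m-l) * d m)" unfolding B_def
      using that p_ge dnn by (intro sum_mono mult_right_mono power_increasing) auto
    also have "\<dots> \<le> B l" unfolding B_def
      using that p_ge dnn by (intro sum_mono2) auto
    finally show ?thesis .
  qed
  have Brec: "B l = d l + p * B (Suc l)" if "l \<le> L" for l
  proof -
    have e: "{l..L} = insert l {Suc l..L}" using that by auto
    have "p * B (Suc l) = (\<Sum>m\<in>{Suc l..L}. p^(m-l) * d m)"
      unfolding B_def sum_distrib_left
    proof (rule sum.cong)
      fix m assume "m \<in> {Suc l..L}"
      then have "m - l = Suc (m - Suc l)" by auto
      then show "p * (p ^ (m - Suc l) * d m) = p ^ (m - l) * d m" by simp
    qed simp
    then show ?thesis unfolding B_def e by simp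
  qed
  have xhat_sp: "xhat l \<in> level_space lev l" if "l \<in> {1..L}" for l
    using xhat_def[OF that] P_range[OF that] yhat_in[OF that] level_space_add by metis
  have xtil_sp: "xtil l \<in> level_space lev l" if "l \<in> {1..L}" for l
    using xtil_def[OF that] P_range[OF that] ytil_in[OF that] level_space_add by metis
  have lev_in: "lev i \<in> {1..L}" for i using levels by auto
  have comp: "(\<Sum>m\<in>A. f m) $ i = (if lev i \<in> A then f (lev i) $ i else 0)"
    if "A \<subseteq> {1..L}" "\<And>m. m \<in> {1..L} \<Longrightarrow> f m \<in> level_space lev m" for A f i
  proof -
    have "(\<Sum>m\<in>A. f m) $ i = (\<Sum>m\<in>A. f m $ i)" by (rule sum_component)
    also have "\<dots> = (\<Sum>m\<in>A. if m = lev i then f m $ i else 0)"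
    proof (rule sum.cong)
      fix m assume "m \<in> A"
      then have "f m \<in> level_space lev m" using that by auto
      then show "f m $ i = (if m = lev i then f m $ i else 0)"
        unfolding level_space_def by auto
    qed simp
    also have "\<dots> = (if lev i \<in> A then f (lev i) $ i else 0)"
      by (rule sum.delta[OF finite_subset[OF that(1)], simplified])
    finally show ?thesis .
  qed
  have diff_sp: "xhat m - xtil m \<in> level_space lev m" if "m \<in> {1..L}" for m
    using xhat_sp[OF that] xtil_sp[OF that] unfolding level_space_def by auto
  have key: "l \<in> {1..L} \<longrightarrow> infnorm (xhat l - xtil l) \<le> B l" for l
  proof (induction "L - l" arbitrary: l rule: less_induct)
    case less
    show ?case
    proof
      assume l: "l \<in> {1..L}"
      have IH: "infnorm (xhat m - xtil m) \<le> B m" if "m \<in> {l<..L}" for m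
        using less[of m] that l by auto
      define S where "S = (\<Sum>m\<in>{l<..L}. xhat m - xtil m)"
      have S_eq: "(\<Sum>m\<in>{l<..L}. xhat m) - (\<Sum>m\<in>{l<..L}. xtil m) = S"
        unfolding S_def by (simp add: sum_subtractf)
      have "infnorm S \<le> B (Suc l)"
      proof (rule infnorm_le_cart)
        fix i
        have "S $ i = (if lev i \<in> {l<..L} then (xhat (lev i) - xtil (lev i)) $ i else 0)"
          unfolding S_def using diff_sp by (intro comp) auto
        moreover have "\<bar>(xhat (lev i) - xtil (lev i)) $ i\<bar> \<le> B (Suc l)" if "lev i \<in> {l<..L}"
          using component_le_infnorm_cart[of "xhat (lev i) - xtil (lev i)" i] IH[OF that]
            Bmono[of "Suc l" "lev i"] that by auto
        ultimately show "\<bar>S $ i\<bar> \<le> B (Suc l)" using Bnn[of "Suc l"] by auto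
      qed
      have "xhat l - xtil l = P l S + (yhat l - ytil l)"
        using xhat_def[OF l] xtil_def[OF l] linear_diff[OF P_linear[OF l]] S_eq
        by (metis add_diff_add)
      then have "infnorm (xhat l - xtil l) \<le> infnorm (P l S) + d l"
        unfolding d_def by (metis infnorm_triangle)
      also have "\<dots> \<le> p * infnorm S + d l" using P_norm[OF l] by auto
      also have "\<dots> \<le> p * B (Suc l) + d l"
        using \<open>infnorm S \<le> B (Suc l)\<close> p_ge by (intro add_right_mono mult_left_mono) auto
      also have "\<dots> = B l" using Brec[of l] l by auto
      finally show "infnorm (xhat l - xtil l) \<le> B l" .
    qed
  qed
  have "infnorm (x - (\<Sum>l\<in>{1..L}. xtil l)) \<le> eb + B 1"
  proof (rule infnorm_le_cart)
    fix i
    define l where "l = lev i"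
    have l: "l \<in> {1..L}" unfolding l_def by (rule lev_in)
    have "(\<Sum>l\<in>{1..L}. xtil l) $ i = xtil l $ i"
      using comp[of "{1..L}" xtil i] xtil_sp lev_in unfolding l_def by auto
    moreover have "x $ i = lvl_proj lev l x $ i" unfolding lvl_proj_def l_def by simp
    ultimately have "(x - (\<Sum>l\<in>{1..L}. xtil l)) $ i
        = ((lvl_proj lev l x - P l (\<Sum>m\<in>{l<..L}. xhat m)) - yhat l) $ i + (xhat l - xtil l) $ i"
      using xhat_def[OF l] by simp
    moreover have "\<bar>((lvl_proj lev l x - P l (\<Sum>m\<in>{l<..L}. xhat m)) - yhat l) $ i\<bar> \<le> eb"
      using component_le_infnorm_cart quant[OF l] order_trans by blast
    moreover have "\<bar>(xhat l - xtil l) $ i\<bar> \<le> B 1"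
      using component_le_infnorm_cart[of "xhat l - xtil l" i] key[of l] l Bmono[of 1 l] by auto
    ultimately show "\<bar>(x - (\<Sum>l\<in>{1..L}. xtil l)) $ i\<bar> \<le> eb + B 1" by linarith
  qed
  moreover have "B 1 = (\<Sum>l<L. p ^ l * infnorm (yhat (l + 1) - ytil (l + 1)))"
    unfolding B_def d_def by (subst reidx) simp
  ultimately show ?thesis by simp
qed


end
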